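(* Let $n=2$, $m=1$, $c_1=10$, so $\mathcal{X}=\{0,1,\dots,10\}$. Suppose bidder 2 answers every demand query at price $p\ge0$ as follows: if $p<94/10$ she answers $10$; if $p=94/10$ she answers either $10$ or $0$; if $p>94/10$ she answers $0$. Let $\{p^1,\dots,p^{\ell}\}\subset[0,\infty)$ be the finite set of prices at which bidder 2 is queried, with responses $x_2^*(p^r)$. For $\lambda>0$ let $\theta^*$ be any (local) minimizer of the L2-regularized loss $$L^{\lambda}(\theta)=\sum_{r=1}^{\ell}\Big(\mathcal{M}_\theta(\hat x_2^*(p^r))-p^r\hat x_2^*(p^r)-\big(\mathcal{M}_\theta(x_2^*(p^r))-p^r x_2^*(p^r)\big)\Big)^+ +\lambda\|\theta\|_2^2,$$ where $\hat x_2^*(p^r)\in\arg\max_{x\in\mathcal{X}}\big(\mathcal{M}_\theta(x)-p^r x\big)$ and $\mathcal{M}_\theta$ is an MVNN. Then the MVNN $\mathcal{M}_{\theta^*}:\mathcal{X}\to\mathbb{R}$ is linear.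
   Context: An MVNN (monotone-value neural network) on $\mathcal{X}=\{0,\dots,c_1\}\times\cdots\times\{0,\dots,c_m\}$ with parameters $\theta=(W,b)$ is $\mathcal{M}_\theta(x)=W^{K}\varphi_{0,t^{K-1}}\big(\cdots\varphi_{0,t^{1}}(W^{1}(Dx)+b^{1})\cdots\big)$, where $D=\mathrm{diag}(1/c_1,\dots,1/c_m)$ is a fixed normalization, the weight matrices $W^k$ (trainable) have nonnegative entries, the biases $b^k$ (trainable) have nonpositive entries, and the activation is the bounded ReLU $\varphi_{0,t}(z)=\min(t,\max(0,z))$ applied componentwise with fixed cutoffs $t^k>0$ (no linear skip connections). $\|\theta\|_2^2$ is the sum of squares of all weights and biases. "Linear" means $\mathcal{M}_{\theta^*}(x)=\alpha x$ for all $x\in\mathcal{X}$, for some constant $\alpha$. $(\cdot)^+=\max(\cdot,0)$. *)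

theory Defs
  imports Complex_Main
begin

text \<open>Parameters of an MVNN: weights W k i j (layer k = 1..K, row i < d k, column j < d (k-1))
 and biases b k i (layer k = 1..K-1, i < d k).  Architecture: K layers, widths d, cutoffs t.\<close>

type_synonym params = "(nat \<Rightarrow> nat \<Rightarrow> nat \<Rightarrow> real) \<times> (nat \<Rightarrow> nat \<Rightarrow> real)"

definition brelu :: "real \<Rightarrow> real \<Rightarrow> real" where
  "brelu t z = min t (max 0 z)"

text \<open>Hidden layer values; input dimension m = 1 and D = diag(1/c_1) with c_1 = 10.\<close>
fun hidden :: "(nat \<Rightarrow> nat) \<Rightarrow> (nat \<Rightarrow> real) \<Rightarrow> params \<Rightarrow> nat \<Rightarrow> nat \<Rightarrow> nat \<Rightarrow> real" where
  "hidden d t \<theta> x 0 = (\<lambda>j. if j = 0 then real x / 10 else 0)"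
| "hidden d t \<theta> x (Suc k) = (\<lambda>i. brelu (t (Suc k))
      ((\<Sum>j<d k. fst \<theta> (Suc k) i j * hidden d t \<theta> x k j) + snd \<theta> (Suc k) i))"

definition mvnn :: "nat \<Rightarrow> (nat \<Rightarrow> nat) \<Rightarrow> (nat \<Rightarrow> real) \<Rightarrow> params \<Rightarrow> nat \<Rightarrow> real" where
  "mvnn K d t \<theta> x = (\<Sum>j<d (K - 1). fst \<theta> K 0 j * hidden d t \<theta> x (K - 1) j)"

text \<open>Admissible parameters: nonnegative weights, nonpositive biases, all entries outside
 the architecture's index ranges equal to zero (so the parameter space is a finite-dimensional
 Euclidean space).\<close>
definition admissible :: "nat \<Rightarrow> (nat \<Rightarrow> nat) \<Rightarrow> params \<Rightarrow> bool" where
  "admissible K d \<theta> \<longleftrightarrow>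
     (\<forall>k i j. (1 \<le> k \<and> k \<le> K \<and> i < d k \<and> j < d (k - 1)) \<longrightarrow> fst \<theta> k i j \<ge> 0) \<and>
     (\<forall>k i j. \<not> (1 \<le> k \<and> k \<le> K \<and> i < d k \<and> j < d (k - 1)) \<longrightarrow> fst \<theta> k i j = 0) \<and>
     (\<forall>k i. (1 \<le> k \<and> k < K \<and> i < d k) \<longrightarrow> snd \<theta> k i \<le> 0) \<and>
     (\<forall>k i. \<not> (1 \<le> k \<and> k < K \<and> i < d k) \<longrightarrow> snd \<theta> k i = 0)"

definition param_normsq :: "nat \<Rightarrow> (nat \<Rightarrow> nat) \<Rightarrow> params \<Rightarrow> real" where
  "param_normsq K d \<theta> =
     (\<Sum>k\<in>{1..K}. \<Sum>i<d k. \<Sum>j<d (k - 1). (fst \<theta> k i j)\<^sup>2) +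
     (\<Sum>k\<in>{1..<K}. \<Sum>i<d k. (snd \<theta> k i)\<^sup>2)"

definition param_diff :: "params \<Rightarrow> params \<Rightarrow> params" where
  "param_diff \<theta> \<eta> = ((\<lambda>k i j. fst \<theta> k i j - fst \<eta> k i j), (\<lambda>k i. snd \<theta> k i - snd \<eta> k i))"

definition pos_part :: "real \<Rightarrow> real" where
  "pos_part z = max z 0"

text \<open>The L2-regularised loss; xhat \<theta> p is the chosen argmax of x \<mapsto> M_\<theta>(x) - p x on X,
 resp p is bidder 2's reported demand at price p.\<close>
definition loss :: "nat \<Rightarrow> (nat \<Rightarrow> nat) \<Rightarrow> (nat \<Rightarrow> real) \<Rightarrow> real set \<Rightarrow> (real \<Rightarrow> nat)
    \<Rightarrow> (params \<Rightarrow> real \<Rightarrow> nat) \<Rightarrow> real \<Rightarrow> params \<Rightarrow> real" where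
  "loss K d t Ps resp xhat lam \<theta> =
     (\<Sum>p\<in>Ps. pos_part ((mvnn K d t \<theta> (xhat \<theta> p) - p * real (xhat \<theta> p))
                       - (mvnn K d t \<theta> (resp p) - p * real (resp p))))
     + lam * param_normsq K d \<theta>"

end

theory Submission
  imports Defs
begin


definition pre :: "(nat \<Rightarrow> nat) \<Rightarrow> (nat \<Rightarrow> real) \<Rightarrow> params \<Rightarrow> nat \<Rightarrow> nat \<Rightarrow> nat \<Rightarrow> real" where
  "pre d t \<theta> x k i = (\<Sum>j<d (k - 1). fst \<theta> k i j * hidden d t \<theta> x (k - 1) j) + snd \<theta> k i"

lemma hidden_Suc_pre: "hidden d t \<theta> x (Suc k) i = brelu (t (Suc k)) (pre d t \<theta> x (Suc k) i)"
  by (simp add: pre_def)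

lemma adm_W: "admissible K d \<theta> \<Longrightarrow> 0 \<le> fst \<theta> k i j"
  unfolding admissible_def
  by (cases "1 \<le> k \<and> k \<le> K \<and> i < d k \<and> j < d (k - 1)") auto

lemma adm_b: "admissible K d \<theta> \<Longrightarrow> snd \<theta> k i \<le> 0"
  unfolding admissible_def
  by (cases "1 \<le> k \<and> k < K \<and> i < d k") auto

lemma brelu_mono: "z \<le> z' \<Longrightarrow> brelu t z \<le> brelu t z'"
  unfolding brelu_def by auto

lemma brelu_nonneg: "0 \<le> t \<Longrightarrow> 0 \<le> brelu t z"
  unfolding brelu_def by auto

lemma brelu_nonpos: "0 \<le> t \<Longrightarrow> z \<le> 0 \<Longrightarrow> brelu t z = 0"
  unfolding brelu_def by auto

lemma brelu_id: "0 \<le> z \<Longrightarrow> z \<le> t \<Longrightarrow> brelu t z = z"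
  unfolding brelu_def by auto

lemma brelu_sat: "t \<le> z \<Longrightarrow> 0 \<le> t \<Longrightarrow> brelu t z = t"
  unfolding brelu_def by auto

lemma hidden_lower:
  assumes "\<forall>m' i j. m' \<le> m \<longrightarrow> fst \<theta>' m' i j = fst \<theta> m' i j"
    and "\<forall>m' i. m' \<le> m \<longrightarrow> snd \<theta>' m' i = snd \<theta> m' i"
  shows "hidden d t \<theta>' x m = hidden d t \<theta> x m"
  using assms
proof (induction m)
  case 0
  then show ?case by simp
next
  case (Suc m)
  have IH: "hidden d t \<theta>' x m = hidden d t \<theta> x m" using Suc by auto
  show ?case using Suc.prems by (auto simp: IH)
qed

lemma hidden_upper_eq:
  assumes "\<forall>m' i j. m' > k \<longrightarrow> fst \<theta>' m' i j = fst \<theta> m' i j"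
    and "\<forall>m' i. m' > k \<longrightarrow> snd \<theta>' m' i = snd \<theta> m' i"
    and "hidden d t \<theta>' x k = hidden d t \<theta> x k"
  shows "hidden d t \<theta>' x (k + n) = hidden d t \<theta> x (k + n)"
proof (induction n)
  case 0
  then show ?case using assms by simp
next
  case (Suc n)
  show ?case using assms(1,2) by (auto simp: Suc.IH)
qed

lemma hidden_upper_le:
  assumes "\<forall>m' i j. m' > k \<longrightarrow> fst \<theta>' m' i j = fst \<theta> m' i j"
    and "\<forall>m' i. m' > k \<longrightarrow> snd \<theta>' m' i = snd \<theta> m' i"
    and "\<forall>m i j. 0 \<le> fst \<theta> m i j"
    and "\<forall>j. hidden d t \<theta>' x k j \<le> hidden d t \<theta> x k j"
  shows "hidden d t \<theta>' x (k + n) j \<le> hidden d t \<theta> x (k + n) j"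
proof (induction n arbitrary: j)
  case 0
  then show ?case using assms by simp
next
  case (Suc n)
  have "(\<Sum>l<d (k + n). fst \<theta>' (Suc (k + n)) j l * hidden d t \<theta>' x (k + n) l) + snd \<theta>' (Suc (k + n)) j
      \<le> (\<Sum>l<d (k + n). fst \<theta> (Suc (k + n)) j l * hidden d t \<theta> x (k + n) l) + snd \<theta> (Suc (k + n)) j"
    using assms(1,2) assms(3) Suc.IH
    by (auto intro!: sum_mono mult_left_mono)
  then show ?case by (simp add: brelu_mono)
qed

lemma mvnn_le_of_layer:
  assumes "\<forall>m' i j. m' > k \<longrightarrow> fst \<theta>' m' i j = fst \<theta> m' i j"
    and "\<forall>m' i. m' > k \<longrightarrow> snd \<theta>' m' i = snd \<theta> m' i"
    and "\<forall>m i j. 0 \<le> fst \<theta> m i j"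
    and "\<forall>j. hidden d t \<theta>' x k j \<le> hidden d t \<theta> x k j"
    and "k < K"
  shows "mvnn K d t \<theta>' x \<le> mvnn K d t \<theta> x"
proof -
  have K: "K - 1 = k + (K - 1 - k)" using assms(5) by simp
  have "\<And>j. hidden d t \<theta>' x (K - 1) j \<le> hidden d t \<theta> x (K - 1) j"
    using hidden_upper_le[OF assms(1-4)] K by metis
  moreover have "\<And>j. fst \<theta>' K 0 j = fst \<theta> K 0 j" using assms(1,5) by auto
  ultimately show ?thesis unfolding mvnn_def using assms(3)
    by (auto intro!: sum_mono mult_left_mono)
qed

lemma mvnn_eq_of_layer:
  assumes "\<forall>m' i j. m' > k \<longrightarrow> fst \<theta>' m' i j = fst \<theta> m' i j"
    and "\<forall>m' i. m' > k \<longrightarrow> snd \<theta>' m' i = snd \<theta> m' i"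
    and "hidden d t \<theta>' x k = hidden d t \<theta> x k"
    and "k < K"
  shows "mvnn K d t \<theta>' x = mvnn K d t \<theta> x"
proof -
  have K: "K - 1 = k + (K - 1 - k)" using assms(4) by simp
  have "hidden d t \<theta>' x (K - 1) = hidden d t \<theta> x (K - 1)"
    using hidden_upper_eq[OF assms(1-3)] K by metis
  moreover have "\<And>j. fst \<theta>' K 0 j = fst \<theta> K 0 j" using assms(1,4) by auto
  ultimately show ?thesis unfolding mvnn_def by auto
qed

declare hidden.simps(2)[simp del]

locale net =
  fixes K :: nat and d :: "nat \<Rightarrow> nat" and t :: "nat \<Rightarrow> real"
  assumes K: "K \<ge> 1" and tpos: "\<forall>k. 1 \<le> k \<and> k < K \<longrightarrow> t k > 0"
begin

lemma hidden_nonneg: "m < K \<Longrightarrow> 0 \<le> hidden d t \<theta> x m j"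
proof (induction m arbitrary: j)
  case 0
  then show ?case by simp
next
  case (Suc m)
  then have "t (Suc m) > 0" using tpos by auto
  then show ?case by (simp add: brelu_nonneg hidden.simps(2))
qed

lemma hidden_zero: "admissible K d \<theta> \<Longrightarrow> m < K \<Longrightarrow> hidden d t \<theta> 0 m j = 0"
proof (induction m arbitrary: j)
  case 0
  then show ?case by simp
next
  case (Suc m)
  then have "t (Suc m) > 0" using tpos by auto
  moreover have "snd \<theta> (Suc m) j \<le> 0" using adm_b Suc by blast
  ultimately show ?case using Suc by (simp add: brelu_nonpos hidden.simps(2))
qed

lemma mvnn_zero: "admissible K d \<theta> \<Longrightarrow> mvnn K d t \<theta> 0 = 0"
  unfolding mvnn_def using hidden_zero K by simp

lemma mvnn_nonneg: "admissible K d \<theta> \<Longrightarrow> 0 \<le> mvnn K d t \<theta> x"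
proof -
  assume a: "admissible K d \<theta>"
  have "K - 1 < K" using K by simp
  then have "\<And>j. 0 \<le> hidden d t \<theta> x (K - 1) j" by (rule hidden_nonneg)
  then show ?thesis unfolding mvnn_def using adm_W[OF a]
    by (auto intro!: sum_nonneg mult_nonneg_nonneg)
qed

lemma star:
  assumes adm: "admissible K d \<theta>"
    and A: "\<forall>m j. 1 \<le> m \<and> m < K \<longrightarrow> pre d t \<theta> 10 m j \<le> t m"
    and x: "x \<le> 10"
  shows "m < K \<Longrightarrow> hidden d t \<theta> x m j \<le> real x / 10 * hidden d t \<theta> 10 m j"
proof (induction m arbitrary: j)
  case 0
  then show ?case by simp
next
  case (Suc m)
  have tp: "t (Suc m) > 0" using tpos Suc by auto
  have x01: "0 \<le> real x / 10" "real x / 10 \<le> 1" using x by auto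
  have "(\<Sum>l<d m. fst \<theta> (Suc m) j l * hidden d t \<theta> x m l)
      \<le> (\<Sum>l<d m. fst \<theta> (Suc m) j l * (real x / 10 * hidden d t \<theta> 10 m l))"
  proof (rule sum_mono)
    fix l
    have "m < K" using Suc by simp
    then show "fst \<theta> (Suc m) j l * hidden d t \<theta> x m l \<le> fst \<theta> (Suc m) j l * (real x / 10 * hidden d t \<theta> 10 m l)"
      by (rule mult_left_mono[OF Suc.IH adm_W[OF adm]])
  qed
  also have "\<dots> = real x / 10 * (\<Sum>l<d m. fst \<theta> (Suc m) j l * hidden d t \<theta> 10 m l)"
    by (simp add: sum_distrib_left algebra_simps)
  finally have s: "(\<Sum>l<d m. fst \<theta> (Suc m) j l * hidden d t \<theta> x m l)
      \<le> real x / 10 * (\<Sum>l<d m. fst \<theta> (Suc m) j l * hidden d t \<theta> 10 m l)" .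
  have b: "snd \<theta> (Suc m) j \<le> real x / 10 * snd \<theta> (Suc m) j"
  proof -
    have "(1 - real x / 10) * snd \<theta> (Suc m) j \<le> 0"
      using adm_b[OF adm] x01 by (intro mult_nonneg_nonpos) auto
    then show ?thesis by (simp add: algebra_simps)
  qed
  have z: "pre d t \<theta> x (Suc m) j \<le> real x / 10 * pre d t \<theta> 10 (Suc m) j"
    using s b by (simp add: pre_def algebra_simps)
  have z10: "pre d t \<theta> 10 (Suc m) j \<le> t (Suc m)" using A Suc by auto
  show ?case
  proof (cases "pre d t \<theta> x (Suc m) j \<le> 0")
    case True
    have h0: "hidden d t \<theta> x (Suc m) j = 0"
      unfolding hidden_Suc_pre using True tp by (simp add: brelu_nonpos)
    have "0 \<le> hidden d t \<theta> 10 (Suc m) j"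
      unfolding hidden_Suc_pre using tp by (simp add: brelu_nonneg)
    then show ?thesis using h0 x01 by simp
  next
    case False
    then have p10: "0 < pre d t \<theta> 10 (Suc m) j" using z x01
      by (smt (verit) mult_nonneg_nonpos)
    have "brelu (t (Suc m)) (pre d t \<theta> x (Suc m) j) \<le> pre d t \<theta> x (Suc m) j"
      using False unfolding brelu_def by auto
    then show ?thesis using z p10 z10
      by (simp add: hidden_Suc_pre brelu_id)
  qed
qed

lemma mvnn_star:
  assumes adm: "admissible K d \<theta>"
    and A: "\<forall>m j. 1 \<le> m \<and> m < K \<longrightarrow> pre d t \<theta> 10 m j \<le> t m"
    and x: "x \<le> 10"
  shows "mvnn K d t \<theta> x \<le> real x / 10 * mvnn K d t \<theta> 10"
proof -
  have "mvnn K d t \<theta> x \<le> (\<Sum>j<d (K - 1). fst \<theta> K 0 j * (real x / 10 * hidden d t \<theta> 10 (K - 1) j))"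
    unfolding mvnn_def
  proof (rule sum_mono)
    fix l
    have "K - 1 < K" using K by simp
    then show "fst \<theta> K 0 l * hidden d t \<theta> x (K - 1) l \<le> fst \<theta> K 0 l * (real x / 10 * hidden d t \<theta> 10 (K - 1) l)"
      by (rule mult_left_mono[OF star[OF adm A x] adm_W[OF adm]])
  qed
  also have "\<dots> = real x / 10 * mvnn K d t \<theta> 10"
    unfolding mvnn_def by (simp add: sum_distrib_left algebra_simps)
  finally show ?thesis .
qed

lemma linear_hidden:
  assumes adm: "admissible K d \<theta>"
    and A: "\<forall>m j. 1 \<le> m \<and> m < K \<longrightarrow> pre d t \<theta> 10 m j \<le> t m"
    and B: "\<forall>m j. snd \<theta> m j = 0"
    and x: "x \<le> 10"
  shows "m < K \<Longrightarrow> hidden d t \<theta> x m j = real x / 10 * hidden d t \<theta> 10 m j"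
proof (induction m arbitrary: j)
  case 0
  then show ?case by simp
next
  case (Suc m)
  have "(\<Sum>l<d m. fst \<theta> (Suc m) j l * hidden d t \<theta> x m l)
      = (\<Sum>l<d m. fst \<theta> (Suc m) j l * (real x / 10 * hidden d t \<theta> 10 m l))"
    using Suc by (intro sum.cong) auto
  also have "\<dots> = real x / 10 * (\<Sum>l<d m. fst \<theta> (Suc m) j l * hidden d t \<theta> 10 m l)"
    by (simp add: sum_distrib_left algebra_simps)
  finally have z: "pre d t \<theta> x (Suc m) j = real x / 10 * pre d t \<theta> 10 (Suc m) j"
    by (simp add: pre_def B)
  have z10: "pre d t \<theta> 10 (Suc m) j \<le> t (Suc m)" using A Suc by auto
  have z0: "0 \<le> pre d t \<theta> 10 (Suc m) j"
  proof -
    have "m < K" using Suc by simp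
    then have "\<And>l. 0 \<le> hidden d t \<theta> 10 m l" by (rule hidden_nonneg)
    then show ?thesis
    unfolding pre_def using B adm_W[OF adm]
    by (auto intro!: sum_nonneg mult_nonneg_nonneg)
  qed
  have x01: "0 \<le> real x / 10" "real x / 10 \<le> 1" using x by auto
  have a: "0 \<le> pre d t \<theta> x (Suc m) j" by (subst z) (rule mult_nonneg_nonneg[OF x01(1) z0])
  have b: "pre d t \<theta> x (Suc m) j \<le> t (Suc m)" using z z0 x01 z10
    by (smt (verit) mult_left_le_one_le)
  show ?case using z z0 z10 a b by (simp add: hidden_Suc_pre brelu_id)
qed

lemma mvnn_linear:
  assumes adm: "admissible K d \<theta>"
    and A: "\<forall>m j. 1 \<le> m \<and> m < K \<longrightarrow> pre d t \<theta> 10 m j \<le> t m"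
    and B: "\<forall>m j. snd \<theta> m j = 0"
    and x: "x \<le> 10"
  shows "mvnn K d t \<theta> x = real x / 10 * mvnn K d t \<theta> 10"
proof -
  have "K - 1 < K" using K by simp
  then have "mvnn K d t \<theta> x = (\<Sum>j<d (K - 1). fst \<theta> K 0 j * (real x / 10 * hidden d t \<theta> 10 (K - 1) j))"
    unfolding mvnn_def using linear_hidden[OF adm A B x] by (intro sum.cong) auto
  also have "\<dots> = real x / 10 * mvnn K d t \<theta> 10"
    unfolding mvnn_def by (simp add: sum_distrib_left algebra_simps)
  finally show ?thesis .
qed

end

lemma row_layer_below:
  assumes "k = Suc k0"
    and hW: "\<forall>k' i' j. (k' \<noteq> k \<or> i' \<noteq> i) \<longrightarrow> fst \<theta>' k' i' j = fst \<theta> k' i' j"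
    and hb: "\<forall>k' i'. (k' \<noteq> k \<or> i' \<noteq> i) \<longrightarrow> snd \<theta>' k' i' = snd \<theta> k' i'"
  shows "hidden d t \<theta>' x k0 = hidden d t \<theta> x k0"
  by (rule hidden_lower) (use assms in auto)

lemma row_pre_eq:
  assumes "k = Suc k0"
    and hW: "\<forall>k' i' j. (k' \<noteq> k \<or> i' \<noteq> i) \<longrightarrow> fst \<theta>' k' i' j = fst \<theta> k' i' j"
    and hb: "\<forall>k' i'. (k' \<noteq> k \<or> i' \<noteq> i) \<longrightarrow> snd \<theta>' k' i' = snd \<theta> k' i'"
    and "j \<noteq> i"
  shows "hidden d t \<theta>' x k j = hidden d t \<theta> x k j"
  using row_layer_below[OF assms(1-3), of d t x] assms by (simp add: hidden.simps(2))

lemma row_layer: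
  assumes "k = Suc k0"
    and hW: "\<forall>k' i' j. (k' \<noteq> k \<or> i' \<noteq> i) \<longrightarrow> fst \<theta>' k' i' j = fst \<theta> k' i' j"
    and hb: "\<forall>k' i'. (k' \<noteq> k \<or> i' \<noteq> i) \<longrightarrow> snd \<theta>' k' i' = snd \<theta> k' i'"
    and "hidden d t \<theta>' x k i = hidden d t \<theta> x k i"
  shows "hidden d t \<theta>' x k = hidden d t \<theta> x k"
proof
  fix j show "hidden d t \<theta>' x k j = hidden d t \<theta> x k j"
    using row_pre_eq[OF assms(1-3)] assms(4) by (cases "j = i") auto
qed

lemma row_all:
  assumes "k = Suc k0"
    and hW: "\<forall>k' i' j. (k' \<noteq> k \<or> i' \<noteq> i) \<longrightarrow> fst \<theta>' k' i' j = fst \<theta> k' i' j"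
    and hb: "\<forall>k' i'. (k' \<noteq> k \<or> i' \<noteq> i) \<longrightarrow> snd \<theta>' k' i' = snd \<theta> k' i'"
    and "hidden d t \<theta>' x k i = hidden d t \<theta> x k i"
  shows "hidden d t \<theta>' x m = hidden d t \<theta> x m"
proof -
  have L: "hidden d t \<theta>' x k = hidden d t \<theta> x k" by (rule row_layer[OF assms])
  show ?thesis
  proof (cases "m \<le> k0")
    case True
    then show ?thesis by (intro hidden_lower) (use assms in auto)
  next
    case False
    then have m: "m = k + (m - k)" using assms(1) by simp
    have "hidden d t \<theta>' x (k + (m - k)) = hidden d t \<theta> x (k + (m - k))"
      by (rule hidden_upper_eq) (use hW hb L in auto)
    then show ?thesis using m by metis
  qed
qed

lemma double_delta:
  assumes "k \<in> A" "i \<in> B k" "finite A" "\<And>k. finite (B k)"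
    and "\<And>k' i'. k' \<in> A \<Longrightarrow> i' \<in> B k' \<Longrightarrow> (k' \<noteq> k \<or> i' \<noteq> i) \<Longrightarrow> g k' i' = 0"
  shows "(\<Sum>k'\<in>A. \<Sum>i'\<in>B k'. g k' i') = g k i"
proof -
  have "(\<Sum>k'\<in>A. \<Sum>i'\<in>B k'. g k' i') = (\<Sum>k'\<in>A. if k' = k then g k i else 0)"
  proof (rule sum.cong)
    fix k' assume k': "k' \<in> A"
    show "(\<Sum>i'\<in>B k'. g k' i') = (if k' = k then g k i else 0)"
    proof (cases "k' = k")
      case True
      have "(\<Sum>i'\<in>B k'. g k' i') = (\<Sum>i'\<in>B k. if i' = i then g k i else 0)"
        using True k' assms(5) by (intro sum.cong) auto
      also have "\<dots> = g k i" using assms(2,4) by (simp add: sum.delta)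
      finally show ?thesis using True by simp
    qed (use k' assms(5) in auto)
  qed simp
  also have "\<dots> = g k i" using assms(1,3) by (simp add: sum.delta)
  finally show ?thesis .
qed

lemma normsq_row:
  assumes k: "1 \<le> k" "k < K" "i < d k"
    and hW: "\<forall>k' i' j. (k' \<noteq> k \<or> i' \<noteq> i) \<longrightarrow> fst \<theta>' k' i' j = fst \<theta> k' i' j"
    and hb: "\<forall>k' i'. (k' \<noteq> k \<or> i' \<noteq> i) \<longrightarrow> snd \<theta>' k' i' = snd \<theta> k' i'"
  shows "param_normsq K d \<theta>' = param_normsq K d \<theta> + (\<Sum>j<d (k - 1). (fst \<theta>' k i j)\<^sup>2 - (fst \<theta> k i j)\<^sup>2)
           + ((snd \<theta>' k i)\<^sup>2 - (snd \<theta> k i)\<^sup>2)"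
proof -
  have W: "(\<Sum>k'\<in>{1..K}. \<Sum>i'<d k'. \<Sum>j<d (k' - 1). (fst \<theta>' k' i' j)\<^sup>2)
     - (\<Sum>k'\<in>{1..K}. \<Sum>i'<d k'. \<Sum>j<d (k' - 1). (fst \<theta> k' i' j)\<^sup>2)
     = (\<Sum>k'\<in>{1..K}. \<Sum>i'<d k'. \<Sum>j<d (k' - 1). (fst \<theta>' k' i' j)\<^sup>2 - (fst \<theta> k' i' j)\<^sup>2)"
    by (simp add: sum_subtractf)
  also have "\<dots> = (\<Sum>j<d (k - 1). (fst \<theta>' k i j)\<^sup>2 - (fst \<theta> k i j)\<^sup>2)"
    by (rule double_delta[where g = "\<lambda>k' i'. \<Sum>j<d (k' - 1). (fst \<theta>' k' i' j)\<^sup>2 - (fst \<theta> k' i' j)\<^sup>2"])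
       (use k hW in auto)
  finally have W: "(\<Sum>k'\<in>{1..K}. \<Sum>i'<d k'. \<Sum>j<d (k' - 1). (fst \<theta>' k' i' j)\<^sup>2)
     = (\<Sum>k'\<in>{1..K}. \<Sum>i'<d k'. \<Sum>j<d (k' - 1). (fst \<theta> k' i' j)\<^sup>2)
      + (\<Sum>j<d (k - 1). (fst \<theta>' k i j)\<^sup>2 - (fst \<theta> k i j)\<^sup>2)" by simp
  have "(\<Sum>k'\<in>{1..<K}. \<Sum>i'<d k'. (snd \<theta>' k' i')\<^sup>2) - (\<Sum>k'\<in>{1..<K}. \<Sum>i'<d k'. (snd \<theta> k' i')\<^sup>2)
     = (\<Sum>k'\<in>{1..<K}. \<Sum>i'<d k'. (snd \<theta>' k' i')\<^sup>2 - (snd \<theta> k' i')\<^sup>2)"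
    by (simp add: sum_subtractf)
  also have "\<dots> = (snd \<theta>' k i)\<^sup>2 - (snd \<theta> k i)\<^sup>2"
    by (rule double_delta[where g = "\<lambda>k' i'. (snd \<theta>' k' i')\<^sup>2 - (snd \<theta> k' i')\<^sup>2"])
       (use k hb in auto)
  finally have B: "(\<Sum>k'\<in>{1..<K}. \<Sum>i'<d k'. (snd \<theta>' k' i')\<^sup>2)
     = (\<Sum>k'\<in>{1..<K}. \<Sum>i'<d k'. (snd \<theta> k' i')\<^sup>2) + ((snd \<theta>' k i)\<^sup>2 - (snd \<theta> k i)\<^sup>2)" by simp
  show ?thesis unfolding param_normsq_def W B by simp
qed

lemma exists3: "0 < (a::real) \<Longrightarrow> 0 < b \<Longrightarrow> 0 < c \<Longrightarrow> \<exists>\<eta>>0. \<eta> < a \<and> \<eta> < b \<and> \<eta> < c"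
  by (rule exI[of _ "min a (min b c) / 2"]) auto



theorem propositionC5:
  fixes K :: nat and d :: "nat \<Rightarrow> nat" and t :: "nat \<Rightarrow> real"
    and Ps :: "real set" and resp :: "real \<Rightarrow> nat"
    and xhat :: "params \<Rightarrow> real \<Rightarrow> nat" and lam :: real and \<theta>s :: params
  assumes K: "K \<ge> 1"
    and d_in: "d 0 = 1" and d_out: "d K = 1"
    and d_pos: "\<forall>k. 1 \<le> k \<and> k < K \<longrightarrow> d k \<ge> 1"
    and t_pos: "\<forall>k. 1 \<le> k \<and> k < K \<longrightarrow> t k > 0"
    and Ps_fin: "finite Ps" and Ps_nonneg: "\<forall>p\<in>Ps. p \<ge> 0"
    and resp_lt: "\<forall>p\<in>Ps. p < 94/10 \<longrightarrow> resp p = 10"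
    and resp_eq: "\<forall>p\<in>Ps. p = 94/10 \<longrightarrow> resp p = 10 \<or> resp p = 0"
    and resp_gt: "\<forall>p\<in>Ps. p > 94/10 \<longrightarrow> resp p = 0"
    and xhat_argmax: "\<forall>\<theta> p. xhat \<theta> p \<in> {0..10} \<and>
         (\<forall>x\<in>{0..10::nat}. mvnn K d t \<theta> x - p * real x
                            \<le> mvnn K d t \<theta> (xhat \<theta> p) - p * real (xhat \<theta> p))"
    and lam: "lam > 0"
    and adm: "admissible K d \<theta>s"
    and locmin: "\<exists>\<epsilon>>0. \<forall>\<theta>. admissible K d \<theta> \<and> sqrt (param_normsq K d (param_diff \<theta> \<theta>s)) < \<epsilon>
                   \<longrightarrow> loss K d t Ps resp xhat lam \<theta>s \<le> loss K d t Ps resp xhat lam \<theta>"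
  shows "\<exists>\<alpha>::real. \<forall>x\<in>{0..10::nat}. mvnn K d t \<theta>s x = \<alpha> * real x"
proof -
  interpret net K d t using K t_pos by unfold_locales auto
  obtain \<epsilon> where \<epsilon>: "\<epsilon> > 0" and loc: "\<forall>\<theta>. admissible K d \<theta> \<and> sqrt (param_normsq K d (param_diff \<theta> \<theta>s)) < \<epsilon>
                   \<longrightarrow> loss K d t Ps resp xhat lam \<theta>s \<le> loss K d t Ps resp xhat lam \<theta>"
    using locmin by blast
  define data where "data \<theta> = (\<Sum>p\<in>Ps. pos_part ((mvnn K d t \<theta> (xhat \<theta> p) - p * real (xhat \<theta> p))
                       - (mvnn K d t \<theta> (resp p) - p * real (resp p))))" for \<theta>
  have loss_eq: "\<And>\<theta>. loss K d t Ps resp xhat lam \<theta> = data \<theta> + lam * param_normsq K d \<theta>"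
    by (simp add: loss_def data_def)
  have resp01: "\<forall>p\<in>Ps. resp p = 0 \<or> resp p = 10"
  proof
    fix p assume p: "p \<in> Ps"
    show "resp p = 0 \<or> resp p = 10"
    proof -
      have "p < 94/10 \<or> p = 94/10 \<or> p > 94/10" by linarith
      moreover have "p < 94/10 \<Longrightarrow> resp p = 10" by (rule mp[OF bspec[OF resp_lt p]])
      moreover have "p = 94/10 \<Longrightarrow> resp p = 10 \<or> resp p = 0" by (rule mp[OF bspec[OF resp_eq p]])
      moreover have "p > 94/10 \<Longrightarrow> resp p = 0" by (rule mp[OF bspec[OF resp_gt p]])
      ultimately show ?thesis by argo
    qed
  qed
  have Mz: "mvnn K d t \<theta>s 0 = 0" by (rule mvnn_zero[OF adm])
  have data_le: "data \<theta>' \<le> data \<theta>s"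
    if a1: "admissible K d \<theta>'" and a2: "mvnn K d t \<theta>' 10 = mvnn K d t \<theta>s 10"
      and a3: "\<forall>x\<in>{0..10}. mvnn K d t \<theta>' x \<le> mvnn K d t \<theta>s x \<or>
                 mvnn K d t \<theta>' x \<le> real x / 10 * mvnn K d t \<theta>s 10" for \<theta>'
    unfolding data_def
  proof (rule sum_mono)
    fix p assume p: "p \<in> Ps"
    define x' where "x' = xhat \<theta>' p"
    define V where "V = mvnn K d t \<theta>s (xhat \<theta>s p) - p * real (xhat \<theta>s p)"
    have x': "x' \<in> {0..10}" using xhat_argmax x'_def by blast
    have argm: "\<And>x. x \<in> {0..10} \<Longrightarrow> mvnn K d t \<theta>s x - p * real x \<le> V"
      using xhat_argmax V_def by blast
    have VV: "mvnn K d t \<theta>' x' - p * real x' \<le> V"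
    proof (cases "mvnn K d t \<theta>' x' \<le> mvnn K d t \<theta>s x'")
      case True
      then show ?thesis using argm[OF x'] by linarith
    next
      case False
      then have c: "mvnn K d t \<theta>' x' \<le> real x' / 10 * mvnn K d t \<theta>s 10" using a3 x' by auto
      have v10: "mvnn K d t \<theta>s 10 - p * 10 \<le> V" using argm[of 10] by simp
      have v0: "0 \<le> V" using argm[of 0] Mz by simp
      have x01: "0 \<le> real x' / 10" "real x' / 10 \<le> 1" using x' by auto
      have m: "real x' / 10 * (mvnn K d t \<theta>s 10 - 10 * p) \<le> V"
      proof (cases "mvnn K d t \<theta>s 10 - 10 * p \<ge> 0")
        case True
        then have "real x' / 10 * (mvnn K d t \<theta>s 10 - 10 * p) \<le> mvnn K d t \<theta>s 10 - 10 * p"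
          using x01 by (intro mult_left_le_one_le) auto
        then show ?thesis using v10 by linarith
      next
        case False
        then have "real x' / 10 * (mvnn K d t \<theta>s 10 - 10 * p) \<le> 0"
          using x01 by (intro mult_nonneg_nonpos) auto
        then show ?thesis using v0 by linarith
      qed
      have "real x' / 10 * (mvnn K d t \<theta>s 10 - 10 * p) = real x' / 10 * mvnn K d t \<theta>s 10 - p * real x'"
        by (simp add: algebra_simps)
      then show ?thesis using c m by linarith
    qed
    have r: "mvnn K d t \<theta>' (resp p) = mvnn K d t \<theta>s (resp p)"
      using resp01 p a2 mvnn_zero[OF a1] Mz by auto
    show "pos_part ((mvnn K d t \<theta>' (xhat \<theta>' p) - p * real (xhat \<theta>' p)) - (mvnn K d t \<theta>' (resp p) - p * real (resp p)))
       \<le> pos_part ((mvnn K d t \<theta>s (xhat \<theta>s p) - p * real (xhat \<theta>s p)) - (mvnn K d t \<theta>s (resp p) - p * real (resp p)))"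
      unfolding pos_part_def using VV r x'_def V_def by auto
  qed
  have improve: False
    if a1: "admissible K d \<theta>'" and a2: "param_normsq K d (param_diff \<theta>' \<theta>s) < \<epsilon>\<^sup>2"
      and a3: "param_normsq K d \<theta>' < param_normsq K d \<theta>s" and a4: "data \<theta>' \<le> data \<theta>s" for \<theta>'
  proof -
    have "sqrt (param_normsq K d (param_diff \<theta>' \<theta>s)) < sqrt (\<epsilon>\<^sup>2)"
      using a2 real_sqrt_less_iff by blast
    then have "sqrt (param_normsq K d (param_diff \<theta>' \<theta>s)) < \<epsilon>" using \<epsilon> by simp
    then have "loss K d t Ps resp xhat lam \<theta>s \<le> loss K d t Ps resp xhat lam \<theta>'" using loc a1 by blast
    moreover have "lam * param_normsq K d \<theta>' < lam * param_normsq K d \<theta>s"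
      using a3 lam by simp
    ultimately show False using a4 loss_eq by smt
  qed
  have Wnn: "\<forall>m i j. 0 \<le> fst \<theta>s m i j" using adm_W[OF adm] by blast
  have A: "pre d t \<theta>s 10 k i \<le> t k" if ki: "1 \<le> k" "k < K" "i < d k" for k i
  proof (rule ccontr)
    assume nz: "\<not> pre d t \<theta>s 10 k i \<le> t k"
    obtain k0 where k0: "k = Suc k0" using ki by (cases k) auto
    define S where "S = (\<Sum>j<d k0. fst \<theta>s k i j * hidden d t \<theta>s 10 k0 j)"
    define b where "b = snd \<theta>s k i"
    define Q where "Q = (\<Sum>j<d k0. (fst \<theta>s k i j)\<^sup>2)"
    have tk: "t k > 0" using t_pos ki by auto
    have b0: "b \<le> 0" using adm_b[OF adm] b_def by simp
    have zS: "pre d t \<theta>s 10 k i = S + b" by (simp add: pre_def S_def b_def k0)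
    have Spos: "S > 0" using nz zS tk b0 by linarith
    have Qnn: "Q \<ge> 0" unfolding Q_def by (simp add: sum_nonneg)
    have Qpos: "Q > 0"
    proof (rule ccontr)
      assume "\<not> Q > 0"
      then have "Q = 0" using Qnn by simp
      then have "\<forall>j\<in>{..<d k0}. (fst \<theta>s k i j)\<^sup>2 = 0" unfolding Q_def
        by (subst sum_nonneg_eq_0_iff[symmetric]) auto
      then have "S = 0" unfolding S_def by simp
      then show False using Spos by simp
    qed
    obtain \<eta> where \<eta>: "0 < \<eta>" "\<eta> < 1" "\<eta> < (S + b - t k) / S" "\<eta> < \<epsilon>\<^sup>2 / (Q + 1)"
      using exists3[of 1 "(S + b - t k) / S" "\<epsilon>\<^sup>2 / (Q + 1)"] Spos nz zS Qnn \<epsilon> by auto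
    define \<theta>' where "\<theta>' = ((\<lambda>k' i' j. if k' = k \<and> i' = i then (1 - \<eta>) * fst \<theta>s k' i' j else fst \<theta>s k' i' j), snd \<theta>s)"
    have hW: "\<forall>k' i' j. (k' \<noteq> k \<or> i' \<noteq> i) \<longrightarrow> fst \<theta>' k' i' j = fst \<theta>s k' i' j"
      and hb: "\<forall>k' i'. (k' \<noteq> k \<or> i' \<noteq> i) \<longrightarrow> snd \<theta>' k' i' = snd \<theta>s k' i'"
      by (auto simp: \<theta>'_def)
    have adm': "admissible K d \<theta>'"
      using adm \<eta> unfolding admissible_def \<theta>'_def by auto
    have "param_normsq K d \<theta>' = param_normsq K d \<theta>s + (\<Sum>j<d k0. (fst \<theta>' k i j)\<^sup>2 - (fst \<theta>s k i j)\<^sup>2) + 0"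
      using normsq_row[where K=K and d=d and \<theta>'=\<theta>' and \<theta>=\<theta>s, OF ki hW hb] by (simp add: \<theta>'_def k0)
    also have "(\<Sum>j<d k0. (fst \<theta>' k i j)\<^sup>2 - (fst \<theta>s k i j)\<^sup>2) = (\<Sum>j<d k0. ((1 - \<eta>)\<^sup>2 - 1) * (fst \<theta>s k i j)\<^sup>2)"
      by (intro sum.cong) (auto simp: \<theta>'_def power2_eq_square algebra_simps)
    also have "\<dots> = ((1 - \<eta>)\<^sup>2 - 1) * Q"
      unfolding Q_def by (simp add: sum_distrib_left)
    finally have nrm: "param_normsq K d \<theta>' = param_normsq K d \<theta>s + ((1 - \<eta>)\<^sup>2 - 1) * Q" by simp
    have "((1 - \<eta>)\<^sup>2 - 1) * Q < 0"
    proof (rule mult_neg_pos)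
      show "(1 - \<eta>)\<^sup>2 - 1 < 0" using \<eta> by (simp add: power2_eq_square) (smt (verit) mult_less_cancel_right1)
    qed (rule Qpos)
    then have nrm': "param_normsq K d \<theta>' < param_normsq K d \<theta>s" using nrm by simp
    define Z :: params where "Z = ((\<lambda>_ _ _. 0), (\<lambda>_ _. 0))"
    have "param_normsq K d (param_diff \<theta>' \<theta>s) = param_normsq K d Z
        + (\<Sum>j<d (k - 1). (fst (param_diff \<theta>' \<theta>s) k i j)\<^sup>2 - (fst Z k i j)\<^sup>2) + ((snd (param_diff \<theta>' \<theta>s) k i)\<^sup>2 - (snd Z k i)\<^sup>2)"
      by (rule normsq_row[where K=K and d=d, OF ki]) (auto simp: param_diff_def \<theta>'_def Z_def)
    also have "\<dots> = (\<Sum>j<d k0. \<eta>\<^sup>2 * (fst \<theta>s k i j)\<^sup>2)"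
      by (simp add: param_normsq_def param_diff_def \<theta>'_def k0 Z_def power_mult_distrib algebra_simps)
    also have "\<dots> = \<eta>\<^sup>2 * Q"
      unfolding Q_def by (simp add: sum_distrib_left)
    finally have dif: "param_normsq K d (param_diff \<theta>' \<theta>s) = \<eta>\<^sup>2 * Q" .
    have e1: "\<eta> * Q \<le> Q" using \<eta> Qnn by (intro mult_left_le_one_le) auto
    have "\<eta>\<^sup>2 * Q = \<eta> * (\<eta> * Q)" by (simp add: power2_eq_square)
    also have "\<dots> \<le> \<eta> * Q" using e1 \<eta> by (intro mult_left_mono) auto
    also have "\<eta> * Q < \<epsilon>\<^sup>2"
    proof -
      have "\<eta> * (Q + 1) < \<epsilon>\<^sup>2" using \<eta>(4) Qnn by (simp add: pos_less_divide_eq)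
      then show ?thesis by (simp add: algebra_simps) (smt (verit) \<eta>(1))
    qed
    finally have dif': "param_normsq K d (param_diff \<theta>' \<theta>s) < \<epsilon>\<^sup>2" using dif by simp
    have low: "\<And>x. hidden d t \<theta>' x k0 = hidden d t \<theta>s x k0"
      by (rule row_layer_below[OF k0 hW hb])
    have pre': "\<And>x. pre d t \<theta>' x k i = (1 - \<eta>) * (\<Sum>j<d k0. fst \<theta>s k i j * hidden d t \<theta>s x k0 j) + b"
    proof -
      fix x
      have "pre d t \<theta>' x k i = (\<Sum>j<d k0. fst \<theta>' k i j * hidden d t \<theta>s x k0 j) + snd \<theta>' k i"
        by (simp add: pre_def k0 low)
      also have "\<dots> = (1 - \<eta>) * (\<Sum>j<d k0. fst \<theta>s k i j * hidden d t \<theta>s x k0 j) + b"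
        by (simp add: \<theta>'_def b_def sum_distrib_left algebra_simps)
      finally show "pre d t \<theta>' x k i = (1 - \<eta>) * (\<Sum>j<d k0. fst \<theta>s k i j * hidden d t \<theta>s x k0 j) + b" .
    qed
    have k0K: "k0 < K" using ki k0 by simp
    have le_i: "hidden d t \<theta>' x k i \<le> hidden d t \<theta>s x k i" for x
    proof -
      have "0 \<le> (\<Sum>j<d k0. fst \<theta>s k i j * hidden d t \<theta>s x k0 j)"
        using hidden_nonneg[OF k0K, of \<theta>s x] Wnn by (auto intro!: sum_nonneg)
      then have "pre d t \<theta>' x k i \<le> pre d t \<theta>s x k i"
        unfolding pre' using \<eta> by (simp add: pre_def k0 b_def mult_left_le_one_le)
      then show ?thesis unfolding k0 hidden_Suc_pre by (rule brelu_mono)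
    qed
    have eq10: "hidden d t \<theta>' 10 k i = hidden d t \<theta>s 10 k i"
    proof -
      have "\<eta> * S < S + b - t k" using \<eta>(3) Spos by (simp add: pos_less_divide_eq)
      then have "t k \<le> pre d t \<theta>' 10 k i" unfolding pre' S_def[symmetric] by (simp add: algebra_simps)
      moreover have "t k \<le> pre d t \<theta>s 10 k i" using nz by simp
      ultimately show ?thesis unfolding k0 hidden_Suc_pre using tk k0
        by (simp add: brelu_sat)
    qed
    have L10: "hidden d t \<theta>' 10 k = hidden d t \<theta>s 10 k" by (rule row_layer[OF k0 hW hb eq10])
    have Lx: "\<forall>j. hidden d t \<theta>' x k j \<le> hidden d t \<theta>s x k j" for x
      using row_pre_eq[OF k0 hW hb] le_i by (metis order_refl)
    have hW': "\<forall>m' i j. m' > k \<longrightarrow> fst \<theta>' m' i j = fst \<theta>s m' i j" using hW by auto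
    have hb': "\<forall>m' i. m' > k \<longrightarrow> snd \<theta>' m' i = snd \<theta>s m' i" using hb by auto
    have M10: "mvnn K d t \<theta>' 10 = mvnn K d t \<theta>s 10" by (rule mvnn_eq_of_layer[OF hW' hb' L10 ki(2)])
    have Mx: "mvnn K d t \<theta>' x \<le> mvnn K d t \<theta>s x" for x by (rule mvnn_le_of_layer[OF hW' hb' Wnn Lx ki(2)])
    have "data \<theta>' \<le> data \<theta>s" using data_le[OF adm' M10] Mx by blast
    then show False using improve[OF adm' dif' nrm'] by simp
  qed
  have pre_out: "pre d t \<theta> x m j = 0" if "admissible K d \<theta>" "\<not> j < d m" for \<theta> x m j
    using that unfolding pre_def admissible_def by auto
  have A': "\<forall>m j. 1 \<le> m \<and> m < K \<longrightarrow> pre d t \<theta>s 10 m j \<le> t m"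
  proof (intro allI impI)
    fix m j assume m: "1 \<le> m \<and> m < K"
    show "pre d t \<theta>s 10 m j \<le> t m"
    proof (cases "j < d m")
      case True then show ?thesis using A m by auto
    next
      case False then show ?thesis using pre_out[OF adm False] t_pos m by auto
    qed
  qed
  have frameB: "data \<theta>' \<le> data \<theta>s"
    if ki: "1 \<le> k" "k < K" and k0: "k = Suc k0" and a1: "admissible K d \<theta>'"
      and hW: "\<forall>k' i' j. (k' \<noteq> k \<or> i' \<noteq> i) \<longrightarrow> fst \<theta>' k' i' j = fst \<theta>s k' i' j"
      and hb: "\<forall>k' i'. (k' \<noteq> k \<or> i' \<noteq> i) \<longrightarrow> snd \<theta>' k' i' = snd \<theta>s k' i'"
      and e10: "hidden d t \<theta>' 10 k i = hidden d t \<theta>s 10 k i"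
      and p10: "pre d t \<theta>' 10 k i \<le> t k"
    for \<theta>' k k0 i
  proof -
    have all10: "\<And>m. hidden d t \<theta>' 10 m = hidden d t \<theta>s 10 m" by (rule row_all[OF k0 hW hb e10])
    have A'': "\<forall>m j. 1 \<le> m \<and> m < K \<longrightarrow> pre d t \<theta>' 10 m j \<le> t m"
    proof (intro allI impI)
      fix m j assume m: "1 \<le> m \<and> m < K"
      show "pre d t \<theta>' 10 m j \<le> t m"
      proof (cases "m = k \<and> j = i")
        case True then show ?thesis using p10 by simp
      next
        case False
        then have "pre d t \<theta>' 10 m j = pre d t \<theta>s 10 m j"
          unfolding pre_def all10 using hW hb by auto
        then show ?thesis using A' m by simp
      qed
    qed
    have M10: "mvnn K d t \<theta>' 10 = mvnn K d t \<theta>s 10"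
      unfolding mvnn_def all10 using hW ki by auto
    have "\<forall>x\<in>{0..10}. mvnn K d t \<theta>' x \<le> mvnn K d t \<theta>s x \<or>
                 mvnn K d t \<theta>' x \<le> real x / 10 * mvnn K d t \<theta>s 10"
      using mvnn_star[OF a1 A''] M10 by auto
    then show ?thesis using data_le[OF a1 M10] by blast
  qed
  have B: "snd \<theta>s k i = 0" if ki: "1 \<le> k" "k < K" "i < d k" for k i
  proof (rule ccontr)
    assume "snd \<theta>s k i \<noteq> 0"
    then have bneg: "snd \<theta>s k i < 0" using adm_b[OF adm, of k i] by simp
    obtain k0 where k0: "k = Suc k0" using ki by (cases k) auto
    define S where "S = (\<Sum>j<d k0. fst \<theta>s k i j * hidden d t \<theta>s 10 k0 j)"
    define b where "b = snd \<theta>s k i"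
    define Q where "Q = (\<Sum>j<d k0. (fst \<theta>s k i j)\<^sup>2)"
    have tk: "t k > 0" using t_pos ki by auto
    have b0: "b < 0" using bneg b_def by simp
    have zS: "pre d t \<theta>s 10 k i = S + b" by (simp add: pre_def S_def b_def k0)
    have k0K: "k0 < K" using ki k0 by simp
    have Snn: "S \<ge> 0" unfolding S_def
      using hidden_nonneg[OF k0K, of \<theta>s 10] Wnn by (auto intro!: sum_nonneg)
    have Qnn: "Q \<ge> 0" unfolding Q_def by (simp add: sum_nonneg)
    have zt: "S + b \<le> t k" using A[OF ki] zS by simp
    define Z :: params where "Z = ((\<lambda>_ _ _. 0), (\<lambda>_ _. 0))"
    have nZ: "param_normsq K d Z = 0" by (simp add: param_normsq_def Z_def)
    show False
    proof (cases "S > 0")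
      case Spos: True
      obtain \<eta> where \<eta>: "0 < \<eta>" "\<eta> < 1" "\<eta> < (- b) / S" "\<eta> < \<epsilon>\<^sup>2 / (Q + S\<^sup>2 + 1)"
      proof -
        have "0 < (- b) / S" using b0 Spos by (intro divide_pos_pos) auto
        moreover have "0 < \<epsilon>\<^sup>2 / (Q + S\<^sup>2 + 1)" using \<epsilon> Qnn
          by (intro divide_pos_pos) (auto intro: add_nonneg_pos)
        ultimately show ?thesis using exists3[of 1 "(- b) / S" "\<epsilon>\<^sup>2 / (Q + S\<^sup>2 + 1)"] that by auto
      qed
      have bS: "b + \<eta> * S < 0"
      proof -
        have "\<eta> * S < ((- b) / S) * S" using \<eta>(3) Spos by (intro mult_strict_right_mono) auto
        then show ?thesis using Spos by simp
      qed
      define \<theta>' where "\<theta>' = ((\<lambda>k' i' j. if k' = k \<and> i' = i then (1 - \<eta>) * fst \<theta>s k' i' j else fst \<theta>s k' i' j),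
                                (\<lambda>k' i'. if k' = k \<and> i' = i then b + \<eta> * S else snd \<theta>s k' i'))"
      have hW: "\<forall>k' i' j. (k' \<noteq> k \<or> i' \<noteq> i) \<longrightarrow> fst \<theta>' k' i' j = fst \<theta>s k' i' j"
        and hb: "\<forall>k' i'. (k' \<noteq> k \<or> i' \<noteq> i) \<longrightarrow> snd \<theta>' k' i' = snd \<theta>s k' i'"
        by (auto simp: \<theta>'_def)
      have adm': "admissible K d \<theta>'"
        using adm \<eta> bS ki unfolding admissible_def \<theta>'_def by auto
      have "param_normsq K d \<theta>' = param_normsq K d \<theta>s + (\<Sum>j<d k0. (fst \<theta>' k i j)\<^sup>2 - (fst \<theta>s k i j)\<^sup>2)
             + ((b + \<eta> * S)\<^sup>2 - b\<^sup>2)"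
        using normsq_row[where K=K and d=d and \<theta>'=\<theta>' and \<theta>=\<theta>s, OF ki hW hb] by (simp add: \<theta>'_def k0 b_def)
      also have "(\<Sum>j<d k0. (fst \<theta>' k i j)\<^sup>2 - (fst \<theta>s k i j)\<^sup>2) = (\<Sum>j<d k0. ((1 - \<eta>)\<^sup>2 - 1) * (fst \<theta>s k i j)\<^sup>2)"
        by (intro sum.cong) (auto simp: \<theta>'_def power2_eq_square algebra_simps)
      also have "\<dots> = ((1 - \<eta>)\<^sup>2 - 1) * Q"
        unfolding Q_def by (simp add: sum_distrib_left)
      finally have nrm: "param_normsq K d \<theta>' = param_normsq K d \<theta>s + ((1 - \<eta>)\<^sup>2 - 1) * Q + ((b + \<eta> * S)\<^sup>2 - b\<^sup>2)" .
      have n1: "((1 - \<eta>)\<^sup>2 - 1) * Q \<le> 0"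
      proof (rule mult_nonpos_nonneg)
        show "(1 - \<eta>)\<^sup>2 - 1 \<le> 0" using \<eta> by (simp add: power2_eq_square) (smt (verit) mult_less_cancel_right1)
      qed (rule Qnn)
      have n2: "(b + \<eta> * S)\<^sup>2 - b\<^sup>2 < 0"
      proof -
        have "(b + \<eta> * S)\<^sup>2 - b\<^sup>2 = (\<eta> * S) * (b + (b + \<eta> * S))" by (simp add: power2_eq_square algebra_simps)
        also have "\<dots> < 0" using \<eta> Spos b0 bS by (intro mult_pos_neg) auto
        finally show ?thesis .
      qed
      have nrm': "param_normsq K d \<theta>' < param_normsq K d \<theta>s" using nrm n1 n2 by simp
      have "param_normsq K d (param_diff \<theta>' \<theta>s) = param_normsq K d Z
          + (\<Sum>j<d (k - 1). (fst (param_diff \<theta>' \<theta>s) k i j)\<^sup>2 - (fst Z k i j)\<^sup>2) + ((snd (param_diff \<theta>' \<theta>s) k i)\<^sup>2 - (snd Z k i)\<^sup>2)"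
        by (rule normsq_row[where K=K and d=d, OF ki]) (auto simp: param_diff_def \<theta>'_def Z_def)
      also have "\<dots> = (\<Sum>j<d k0. \<eta>\<^sup>2 * (fst \<theta>s k i j)\<^sup>2) + \<eta>\<^sup>2 * S\<^sup>2"
        using nZ by (simp add: param_diff_def \<theta>'_def k0 Z_def b_def power_mult_distrib algebra_simps)
      also have "\<dots> = \<eta>\<^sup>2 * (Q + S\<^sup>2)"
        unfolding Q_def by (simp add: sum_distrib_left algebra_simps)
      finally have dif: "param_normsq K d (param_diff \<theta>' \<theta>s) = \<eta>\<^sup>2 * (Q + S\<^sup>2)" .
      have QS: "Q + S\<^sup>2 \<ge> 0" using Qnn by simp
      have e1: "\<eta> * (Q + S\<^sup>2) \<le> Q + S\<^sup>2" using \<eta> QS by (intro mult_left_le_one_le) auto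
      have "\<eta>\<^sup>2 * (Q + S\<^sup>2) = \<eta> * (\<eta> * (Q + S\<^sup>2))" by (simp add: power2_eq_square)
      also have "\<dots> \<le> \<eta> * (Q + S\<^sup>2)" using e1 \<eta> by (intro mult_left_mono) auto
      also have "\<eta> * (Q + S\<^sup>2) < \<epsilon>\<^sup>2"
      proof -
        have "\<eta> * (Q + S\<^sup>2 + 1) < \<epsilon>\<^sup>2" using \<eta>(4) QS by (simp add: pos_less_divide_eq)
        then show ?thesis by (simp add: algebra_simps) (smt (verit) \<eta>(1))
      qed
      finally have dif': "param_normsq K d (param_diff \<theta>' \<theta>s) < \<epsilon>\<^sup>2" using dif by simp
      have low: "\<And>x. hidden d t \<theta>' x k0 = hidden d t \<theta>s x k0"
        by (rule row_layer_below[OF k0 hW hb])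
      have "pre d t \<theta>' 10 k i = (\<Sum>j<d k0. fst \<theta>' k i j * hidden d t \<theta>s 10 k0 j) + snd \<theta>' k i"
        by (simp add: pre_def k0 low)
      also have "\<dots> = (1 - \<eta>) * S + (b + \<eta> * S)"
        by (simp add: \<theta>'_def S_def sum_distrib_left algebra_simps)
      finally have p': "pre d t \<theta>' 10 k i = pre d t \<theta>s 10 k i" using zS by (simp add: algebra_simps)
      have e10: "hidden d t \<theta>' 10 k i = hidden d t \<theta>s 10 k i"
        unfolding k0 hidden_Suc_pre using p' k0 by simp
      have p10: "pre d t \<theta>' 10 k i \<le> t k" using p' zS zt by simp
      have "data \<theta>' \<le> data \<theta>s" by (rule frameB[OF ki(1,2) k0 adm' hW hb e10 p10])
      then show False using improve[OF adm' dif' nrm'] by simp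
    next
      case False
      then have S0: "S = 0" using Snn by simp
      obtain \<eta> where \<eta>: "0 < \<eta>" "\<eta> < 1" "\<eta> < \<epsilon>\<^sup>2 / (b\<^sup>2 + 1)"
      proof -
        have "0 < \<epsilon>\<^sup>2 / (b\<^sup>2 + 1)" using \<epsilon>
          by (intro divide_pos_pos) (auto intro: add_nonneg_pos)
        then show ?thesis using exists3[of 1 1 "\<epsilon>\<^sup>2 / (b\<^sup>2 + 1)"] that by auto
      qed
      define \<theta>' where "\<theta>' = (fst \<theta>s, (\<lambda>k' i'. if k' = k \<and> i' = i then (1 - \<eta>) * b else snd \<theta>s k' i'))"
      have hW: "\<forall>k' i' j. (k' \<noteq> k \<or> i' \<noteq> i) \<longrightarrow> fst \<theta>' k' i' j = fst \<theta>s k' i' j"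
        and hb: "\<forall>k' i'. (k' \<noteq> k \<or> i' \<noteq> i) \<longrightarrow> snd \<theta>' k' i' = snd \<theta>s k' i'"
        by (auto simp: \<theta>'_def)
      have bb: "(1 - \<eta>) * b \<le> 0" using \<eta> b0 by (intro mult_nonneg_nonpos) auto
      have adm': "admissible K d \<theta>'"
        using adm bb ki unfolding admissible_def \<theta>'_def by auto
      have nrm: "param_normsq K d \<theta>' = param_normsq K d \<theta>s + 0 + (((1 - \<eta>) * b)\<^sup>2 - b\<^sup>2)"
        using normsq_row[where K=K and d=d and \<theta>'=\<theta>' and \<theta>=\<theta>s, OF ki hW hb] by (simp add: \<theta>'_def k0 b_def)
      have n2: "((1 - \<eta>) * b)\<^sup>2 - b\<^sup>2 < 0"
      proof -
        have "((1 - \<eta>) * b)\<^sup>2 - b\<^sup>2 = (\<eta> * (\<eta> - 2)) * b\<^sup>2" by (simp add: power2_eq_square algebra_simps)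
        also have "\<dots> < 0" using \<eta> b0 by (intro mult_neg_pos mult_pos_neg) auto
        finally show ?thesis .
      qed
      have nrm': "param_normsq K d \<theta>' < param_normsq K d \<theta>s" using nrm n2 by simp
      have "param_normsq K d (param_diff \<theta>' \<theta>s) = param_normsq K d Z
          + (\<Sum>j<d (k - 1). (fst (param_diff \<theta>' \<theta>s) k i j)\<^sup>2 - (fst Z k i j)\<^sup>2) + ((snd (param_diff \<theta>' \<theta>s) k i)\<^sup>2 - (snd Z k i)\<^sup>2)"
        by (rule normsq_row[where K=K and d=d, OF ki]) (auto simp: param_diff_def \<theta>'_def Z_def)
      also have "\<dots> = \<eta>\<^sup>2 * b\<^sup>2"
        using nZ by (simp add: param_diff_def \<theta>'_def Z_def b_def power2_eq_square algebra_simps)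
      finally have dif: "param_normsq K d (param_diff \<theta>' \<theta>s) = \<eta>\<^sup>2 * b\<^sup>2" .
      have Bn: "b\<^sup>2 \<ge> 0" by simp
      have e1: "\<eta> * b\<^sup>2 \<le> b\<^sup>2" using \<eta> Bn by (intro mult_left_le_one_le) auto
      have "\<eta>\<^sup>2 * b\<^sup>2 = \<eta> * (\<eta> * b\<^sup>2)" by (simp add: power2_eq_square)
      also have "\<dots> \<le> \<eta> * b\<^sup>2" using e1 \<eta> by (intro mult_left_mono) auto
      also have "\<eta> * b\<^sup>2 < \<epsilon>\<^sup>2"
      proof -
        have "\<eta> * (b\<^sup>2 + 1) < \<epsilon>\<^sup>2" using \<eta>(3) Bn by (simp add: pos_less_divide_eq)
        then show ?thesis by (simp add: algebra_simps) (smt (verit) \<eta>(1))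
      qed
      finally have dif': "param_normsq K d (param_diff \<theta>' \<theta>s) < \<epsilon>\<^sup>2" using dif by simp
      have low: "\<And>x. hidden d t \<theta>' x k0 = hidden d t \<theta>s x k0"
        by (rule row_layer_below[OF k0 hW hb])
      have "pre d t \<theta>' 10 k i = (\<Sum>j<d k0. fst \<theta>' k i j * hidden d t \<theta>s 10 k0 j) + snd \<theta>' k i"
        by (simp add: pre_def k0 low)
      also have "\<dots> = S + (1 - \<eta>) * b"
        by (simp add: \<theta>'_def S_def)
      finally have p': "pre d t \<theta>' 10 k i = (1 - \<eta>) * b" using S0 by simp
      have p'0: "pre d t \<theta>' 10 k i \<le> 0" using p' bb by simp
      have ps0: "pre d t \<theta>s 10 k i \<le> 0" using zS S0 b0 by simp
      have e10: "hidden d t \<theta>' 10 k i = hidden d t \<theta>s 10 k i"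
        unfolding k0 hidden_Suc_pre using p'0 ps0 tk k0 by (simp add: brelu_nonpos)
      have p10: "pre d t \<theta>' 10 k i \<le> t k" using p'0 tk by simp
      have "data \<theta>' \<le> data \<theta>s" by (rule frameB[OF ki(1,2) k0 adm' hW hb e10 p10])
      then show False using improve[OF adm' dif' nrm'] by simp
    qed
  qed
  have Bfull: "\<forall>m j. snd \<theta>s m j = 0"
  proof (intro allI)
    fix m j
    show "snd \<theta>s m j = 0"
    proof (cases "1 \<le> m \<and> m < K \<and> j < d m")
      case True then show ?thesis using B by blast
    next
      case False then show ?thesis using adm unfolding admissible_def by blast
    qed
  qed
  show ?thesis
  proof (rule exI[of _ "mvnn K d t \<theta>s 10 / 10"], intro ballI)
    fix x :: nat assume "x \<in> {0..10}"
    then have "x \<le> 10" by simp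
    then show "mvnn K d t \<theta>s x = mvnn K d t \<theta>s 10 / 10 * real x"
      using mvnn_linear[OF adm A' Bfull] by simp
  qed
qed

end
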